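(* Let $\mathcal{M}$ be a bounded graph matroid family. If there is a small $\mathcal{M}$-circuit with minimum degree one, then there exists an integer $m\ge2$ such that the star $K_{1,m}$ is the unique (up to isomorphism) small $\mathcal{M}$-circuit with at most $m$ edges and with minimum degree one.
   Context: All graphs are finite and simple and have no isolated vertices. A graph matroid family $\mathcal{M}$ assigns to every graph $G$ a matroid $\mathcal{M}(G)$ on $E(G)$ such that (i) every graph isomorphism $V(G)\to V(H)$ induces an isomorphism $\mathcal{M}(G)\to\mathcal{M}(H)$, and (ii) for every subgraph $H$ of $G$, $\mathcal{M}(H)$ is the restriction of $\mathcal{M}(G)$ to $E(H)$. Let $r(G)$ be the rank of $\mathcal{M}(G)$. $\mathcal{M}$ is bounded if $r(K_n)$ is bounded in $n$; its limit is the rank $r(\mathcal{M})$. An $\mathcal{M}$-circuit is a graph $G$ with $r(G)<|E(G)|$ and $r(G-e)=|E(G)|-1$ for all $e\in E(G)$; it is small if it has at most $r(\mathcal{M})$ edges. *)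

theory Defs
  imports Main
begin

text \<open>Graphs: finite simple graphs without isolated vertices, on vertex set nat,
  represented by their edge sets (each edge a 2-element set of vertices).
  Every finite graph is isomorphic to one of this form.\<close>

type_synonym graph = "nat set set"

definition is_graph :: "graph \<Rightarrow> bool" where
  "is_graph G \<longleftrightarrow> finite G \<and> (\<forall>e\<in>G. \<exists>u v. u \<noteq> v \<and> e = {u, v})"

definition verts :: "graph \<Rightarrow> nat set" where
  "verts G = \<Union>G"

definition graph_iso :: "(nat \<Rightarrow> nat) \<Rightarrow> graph \<Rightarrow> graph \<Rightarrow> bool" where
  "graph_iso f G H \<longleftrightarrow> bij_betw f (verts G) (verts H) \<and>
     (\<forall>u\<in>verts G. \<forall>v\<in>verts G. {u, v} \<in> G \<longleftrightarrow> {f u, f v} \<in> H)"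

definition isomorphic :: "graph \<Rightarrow> graph \<Rightarrow> bool" where
  "isomorphic G H \<longleftrightarrow> (\<exists>f. graph_iso f G H)"

definition matroid :: "'a set \<Rightarrow> ('a set \<Rightarrow> bool) \<Rightarrow> bool" where
  "matroid E indep \<longleftrightarrow> finite E \<and>
     (\<forall>X. indep X \<longrightarrow> X \<subseteq> E) \<and>
     indep {} \<and>
     (\<forall>X Y. indep Y \<and> X \<subseteq> Y \<longrightarrow> indep X) \<and>
     (\<forall>X Y. indep X \<and> indep Y \<and> card X < card Y \<longrightarrow> (\<exists>y\<in>Y - X. indep (insert y X)))"

definition graph_matroid_family :: "(graph \<Rightarrow> nat set set \<Rightarrow> bool) \<Rightarrow> bool" where
  "graph_matroid_family M \<longleftrightarrow>
     (\<forall>G. is_graph G \<longrightarrow> matroid G (M G)) \<and>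
     (\<forall>G H f. is_graph G \<and> is_graph H \<and> graph_iso f G H \<longrightarrow>
        (\<forall>X. X \<subseteq> G \<longrightarrow> (M G X \<longleftrightarrow> M H ((\<lambda>e. f ` e) ` X)))) \<and>
     (\<forall>G H. is_graph G \<and> H \<subseteq> G \<longrightarrow> (\<forall>X. M H X \<longleftrightarrow> (M G X \<and> X \<subseteq> H)))"

definition rank :: "(graph \<Rightarrow> nat set set \<Rightarrow> bool) \<Rightarrow> graph \<Rightarrow> nat" where
  "rank M G = Max {card X | X. M G X}"

definition complete_graph :: "nat \<Rightarrow> graph" where
  "complete_graph n = {{i, j} | i j. i < n \<and> j < n \<and> i \<noteq> j}"

definition bounded_family :: "(graph \<Rightarrow> nat set set \<Rightarrow> bool) \<Rightarrow> bool" where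
  "bounded_family M \<longleftrightarrow> (\<exists>B. \<forall>n. rank M (complete_graph n) \<le> B)"

text \<open>The limit r(M) of a bounded family: the limit (= supremum, the sequence being
  nondecreasing) of r(K_n).\<close>

definition family_limit :: "(graph \<Rightarrow> nat set set \<Rightarrow> bool) \<Rightarrow> nat" where
  "family_limit M = (SUP n. rank M (complete_graph n))"

definition circuit :: "(graph \<Rightarrow> nat set set \<Rightarrow> bool) \<Rightarrow> graph \<Rightarrow> bool" where
  "circuit M G \<longleftrightarrow> is_graph G \<and> rank M G < card G \<and>
     (\<forall>e\<in>G. rank M (G - {e}) = card G - 1)"

definition small_circuit :: "(graph \<Rightarrow> nat set set \<Rightarrow> bool) \<Rightarrow> graph \<Rightarrow> bool" where
  "small_circuit M G \<longleftrightarrow> circuit M G \<and> card G \<le> family_limit M"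

definition degree :: "graph \<Rightarrow> nat \<Rightarrow> nat" where
  "degree G v = card {e \<in> G. v \<in> e}"

definition min_degree_one :: "graph \<Rightarrow> bool" where
  "min_degree_one G \<longleftrightarrow> G \<noteq> {} \<and> Min (degree G ` verts G) = 1"

definition star :: "nat \<Rightarrow> graph" where
  "star m = {{0, i} | i. 1 \<le> i \<and> i \<le> m}"

end

theory Submission
  imports Defs
begin

definition star_at :: "nat \<Rightarrow> nat set \<Rightarrow> graph" where
  "star_at c L = (\<lambda>l. {c, l}) ` L"

lemma is_graph_subset: "is_graph G \<Longrightarrow> H \<subseteq> G \<Longrightarrow> is_graph H"
  unfolding is_graph_def using finite_subset by blast

lemma is_graph_insert: "is_graph G \<Longrightarrow> a \<noteq> b \<Longrightarrow> is_graph (insert {a,b} G)"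
  unfolding is_graph_def by blast

lemma is_graph_Un: "is_graph G \<Longrightarrow> is_graph H \<Longrightarrow> is_graph (G \<union> H)"
  unfolding is_graph_def by blast

lemma is_graph_star_at: "finite L \<Longrightarrow> c \<notin> L \<Longrightarrow> is_graph (star_at c L)"
proof -
  assume a: "finite L" "c \<notin> L"
  have "\<exists>u v. u \<noteq> v \<and> e = {u, v}" if ee: "e \<in> (\<lambda>l. {c, l}) ` L" for e
  proof -
    obtain l where "l \<in> L" "e = {c,l}" using ee by blast
    then show ?thesis using a by metis
  qed
  then show ?thesis unfolding is_graph_def star_at_def using a by blast
qed

lemma finite_verts: "is_graph G \<Longrightarrow> finite (verts G)"
  unfolding is_graph_def verts_def by (metis finite.emptyI finite.insertI finite_Union)

lemma card_star_at: "c \<notin> L \<Longrightarrow> card (star_at c L) = card L"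
  unfolding star_at_def
  by (rule card_image) (auto simp: inj_on_def doubleton_eq_iff)

lemma Union_star_at: "\<Union>(star_at c L) \<subseteq> insert c L"
  unfolding star_at_def by auto

lemma verts_star_at: "L \<noteq> {} \<Longrightarrow> verts (star_at c L) = insert c L"
  unfolding star_at_def verts_def by auto

lemma star_eq: "star m = star_at 0 {1..m}"
  unfolding star_def star_at_def by auto

lemma image_graph:
  assumes "is_graph X" "inj_on h (\<Union>X)"
  shows "is_graph ((\<lambda>e. h ` e) ` X)"
proof -
  have "\<exists>a b. a \<noteq> b \<and> e' = {a, b}" if ee: "e' \<in> (\<lambda>e. h ` e) ` X" for e'
  proof -
    obtain e where e: "e \<in> X" "e' = h ` e" using ee by blast
    obtain u v where uv: "u \<noteq> v" "e = {u,v}" using e(1) assms(1) unfolding is_graph_def by blast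
    have "u \<in> \<Union>X" "v \<in> \<Union>X" using e(1) uv by auto
    then have "h u \<noteq> h v" using uv(1) assms(2) inj_onD by metis
    moreover have "e' = {h u, h v}" using e uv by simp
    ultimately show ?thesis by blast
  qed
  moreover have "finite ((\<lambda>e. h ` e) ` X)" using assms(1) unfolding is_graph_def by simp
  ultimately show ?thesis unfolding is_graph_def by blast
qed

lemma graph_iso_image:
  assumes "is_graph X" "inj_on h (\<Union>X)"
  shows "graph_iso h X ((\<lambda>e. h ` e) ` X)"
  unfolding graph_iso_def verts_def
proof (intro conjI ballI)
  show "bij_betw h (\<Union> X) (\<Union> ((`) h ` X))"
    using assms(2) unfolding bij_betw_def by (simp add: image_Union)
  fix u v assume uv: "u \<in> \<Union>X" "v \<in> \<Union>X"
  show "({u, v} \<in> X) = ({h u, h v} \<in> (`) h ` X)"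
  proof
    assume "{u, v} \<in> X" then show "{h u, h v} \<in> (`) h ` X"
      using image_eqI[of "{h u, h v}" "\<lambda>e. h ` e" "{u,v}" X] by simp
  next
    assume "{h u, h v} \<in> (`) h ` X"
    then obtain e where e: "e \<in> X" "{h u, h v} = h ` e" by auto
    have s1: "e \<subseteq> \<Union>X" using e by auto
    have s2: "{u,v} \<subseteq> \<Union>X" using uv by auto
    have s3: "h ` {u,v} = h ` e" using e by simp
    have "{u,v} = e" using inj_on_image_eq_iff[OF assms(2) s2 s1] s3 by simp
    then show "{u, v} \<in> X" using e by simp
  qed
qed

lemma star_map:
  assumes "finite L" "c \<notin> L"
  shows "\<exists>h. inj_on h (insert c L) \<and> (\<lambda>e. h ` e) ` star_at c L = star (card L)"
proof -
  obtain g where g: "bij_betw g L {0..<card L}" using ex_bij_betw_finite_nat[OF assms(1)] by blast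
  define h where "h z = (if z = c then 0 else Suc (g z))" for z
  have "inj_on h (insert c L)"
    using g assms(2) unfolding h_def bij_betw_def inj_on_def by auto
  moreover have "(\<lambda>e. h ` e) ` star_at c L = star_at 0 (Suc ` g ` L)"
    unfolding star_at_def h_def using assms(2) by (auto simp: image_image) 
  moreover have "Suc ` g ` L = {1..card L}"
    using g unfolding bij_betw_def
    by (simp add: atLeastLessThanSuc_atLeastAtMost)
  ultimately show ?thesis by (auto simp: star_eq)
qed

lemma iso_star_at:
  assumes "finite L" "c \<notin> L"
  shows "isomorphic (star_at c L) (star (card L))"
proof -
  obtain h where h: "inj_on h (insert c L)" "(\<lambda>e. h ` e) ` star_at c L = star (card L)"
    using star_map[OF assms] by blast
  have "inj_on h (\<Union>(star_at c L))" using inj_on_subset[OF h(1) Union_star_at] .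
  then have "graph_iso h (star_at c L) ((\<lambda>e. h ` e) ` star_at c L)"
    using graph_iso_image[OF is_graph_star_at[OF assms]] by blast
  then have "graph_iso h (star_at c L) (star (card L))" using h(2) by simp
  then show ?thesis unfolding isomorphic_def by blast
qed

lemma complete_graph_is_graph: "is_graph (complete_graph n)"
proof -
  have "complete_graph n \<subseteq> Pow {0..<n}" unfolding complete_graph_def by auto
  then have "finite (complete_graph n)" by (rule finite_subset) auto
  then show ?thesis unfolding is_graph_def complete_graph_def by auto
qed

lemma subset_complete_graph:
  assumes "is_graph G" "\<forall>x\<in>verts G. x < n"
  shows "G \<subseteq> complete_graph n"
  using assms unfolding is_graph_def verts_def complete_graph_def by fastforce


locale gmf =
  fixes M :: "graph \<Rightarrow> nat set set \<Rightarrow> bool"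
  assumes gmf: "graph_matroid_family M"
begin

definition ind :: "graph \<Rightarrow> bool" where "ind X \<longleftrightarrow> is_graph X \<and> M X X"

lemma mat: "is_graph G \<Longrightarrow> matroid G (M G)"
  using gmf unfolding graph_matroid_family_def by simp

lemma gmf_iso: "is_graph G \<Longrightarrow> is_graph H \<Longrightarrow> graph_iso f G H \<Longrightarrow> X \<subseteq> G \<Longrightarrow>
   M G X \<longleftrightarrow> M H ((\<lambda>e. f ` e) ` X)"
  using gmf unfolding graph_matroid_family_def by simp

lemma gmf_res: "is_graph G \<Longrightarrow> H \<subseteq> G \<Longrightarrow> M H X \<longleftrightarrow> M G X \<and> X \<subseteq> H"
  using gmf unfolding graph_matroid_family_def by simp

lemma M_iff: assumes "is_graph G" shows "M G X \<longleftrightarrow> X \<subseteq> G \<and> ind X"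
proof
  assume h: "M G X"
  then have s: "X \<subseteq> G" using mat[OF assms] unfolding matroid_def by simp
  have "M X X" using gmf_res[OF assms s, of X] h by simp
  then show "X \<subseteq> G \<and> ind X" using is_graph_subset[OF assms s] s ind_def by simp
next
  assume a: "X \<subseteq> G \<and> ind X"
  then show "M G X" using gmf_res[OF assms, of X X] ind_def by simp
qed

lemma ind_graph: "ind X \<Longrightarrow> is_graph X" unfolding ind_def by simp

lemma ind_empty: "ind {}"
proof -
  have g: "is_graph {}" unfolding is_graph_def by simp
  have "M {} {}" using mat[OF g] unfolding matroid_def by blast
  then show ?thesis using g ind_def by simp
qed

lemma ind_subset: assumes "ind Y" "X \<subseteq> Y" shows "ind X"
proof -
  have g: "is_graph Y" using assms ind_def by simp
  have "M Y Y" using assms ind_def by simp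
  then have "M Y X" using mat[OF g] assms(2) unfolding matroid_def by blast
  then show ?thesis using M_iff[OF g] by simp
qed

lemma ind_aug: assumes "ind X" "ind Y" "card X < card Y"
  shows "\<exists>y\<in>Y - X. ind (insert y X)"
proof -
  have g: "is_graph (X \<union> Y)" using is_graph_Un[OF ind_graph[OF assms(1)] ind_graph[OF assms(2)]] .
  have a: "M (X \<union> Y) X" "M (X \<union> Y) Y" using M_iff[OF g] assms by auto
  have "\<forall>X' Y'. M (X \<union> Y) X' \<and> M (X \<union> Y) Y' \<and> card X' < card Y' \<longrightarrow> (\<exists>y\<in>Y' - X'. M (X \<union> Y) (insert y X'))"
    using mat[OF g] unfolding matroid_def by simp
  then obtain y where "y \<in> Y - X" "M (X \<union> Y) (insert y X)"
    using a assms(3) by meson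
  then show ?thesis using M_iff[OF g] by blast
qed

lemma ind_iso: assumes "is_graph X" "inj_on h (\<Union>X)"
  shows "ind ((\<lambda>e. h ` e) ` X) \<longleftrightarrow> ind X"
proof -
  have g: "is_graph ((\<lambda>e. h ` e) ` X)" using image_graph[OF assms] .
  have "M X X \<longleftrightarrow> M ((\<lambda>e. h ` e) ` X) ((\<lambda>e. h ` e) ` X)"
    using gmf_iso[OF assms(1) g graph_iso_image[OF assms]] by simp
  then show ?thesis using g assms unfolding ind_def by blast
qed

lemma ind_star_at: assumes "finite L" "c \<notin> L"
  shows "ind (star_at c L) \<longleftrightarrow> ind (star (card L))"
proof -
  obtain h where h: "inj_on h (insert c L)" "(\<lambda>e. h ` e) ` star_at c L = star (card L)"
    using star_map[OF assms] by blast
  have "inj_on h (\<Union>(star_at c L))" using inj_on_subset[OF h(1) Union_star_at] .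
  then show ?thesis using ind_iso[OF is_graph_star_at[OF assms]] h(2) by metis
qed

lemma rank_fin: "is_graph G \<Longrightarrow> finite {card X | X. M G X}"
proof -
  assume g: "is_graph G"
  have "{card X | X. M G X} \<subseteq> card ` Pow G" using M_iff[OF g] by auto
  moreover have "finite G" using g is_graph_def by simp
  ultimately show ?thesis using finite_subset by blast
qed

lemma rank_ge: "is_graph G \<Longrightarrow> X \<subseteq> G \<Longrightarrow> ind X \<Longrightarrow> card X \<le> rank M G"
  unfolding rank_def using rank_fin M_iff by (metis (mono_tags, lifting) Max_ge mem_Collect_eq)

lemma rank_le: assumes "is_graph G" "\<And>X. X \<subseteq> G \<Longrightarrow> ind X \<Longrightarrow> card X \<le> k"
  shows "rank M G \<le> k"
proof -
  have "M G {}" using M_iff[OF assms(1)] ind_empty by simp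
  then have "{card X | X. M G X} \<noteq> {}" by blast
  then show ?thesis unfolding rank_def using rank_fin[OF assms(1)] assms M_iff[OF assms(1)]
    by (subst Max_le_iff) auto
qed

lemma rank_attained: assumes "is_graph G" shows "\<exists>X\<subseteq>G. ind X \<and> card X = rank M G"
proof -
  have "M G {}" using M_iff[OF assms(1)] ind_empty by simp
  then have "{card X | X. M G X} \<noteq> {}" by blast
  then have "rank M G \<in> {card X | X. M G X}" unfolding rank_def using rank_fin[OF assms] Max_in by blast
  then show ?thesis using M_iff[OF assms] by auto
qed

lemma circuit_D: assumes "circuit M G" shows "\<not> ind G" "\<And>e. e \<in> G \<Longrightarrow> ind (G - {e})"
proof -
  have g: "is_graph G" and fin: "finite G" using assms unfolding circuit_def is_graph_def by auto
  show "\<not> ind G" using assms rank_ge[OF g] unfolding circuit_def by fastforce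
  fix e assume e: "e \<in> G"
  have g2: "is_graph (G - {e})" using g is_graph_subset by blast
  obtain X where X: "X \<subseteq> G - {e}" "ind X" "card X = rank M (G - {e})" using rank_attained[OF g2] by blast
  have "card X = card (G - {e})" using X(3) assms e fin unfolding circuit_def by simp
  then have "X = G - {e}" using X(1) fin by (simp add: card_subset_eq)
  then show "ind (G - {e})" using X by simp
qed

lemma circuit_I: assumes "is_graph G" "\<not> ind G" "\<And>e. e \<in> G \<Longrightarrow> ind (G - {e})"
  shows "circuit M G"
proof -
  have fin: "finite G" using assms is_graph_def by simp
  have ne: "G \<noteq> {}" using assms(2) ind_empty by auto
  have r1: "rank M G \<le> card G - 1"
  proof (rule rank_le[OF assms(1)])
    fix X assume X: "X \<subseteq> G" "ind X"
    then have "X \<noteq> G" using assms(2) by auto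
    then have "X \<subset> G" using X(1) by (rule psubsetI[rotated])
    then have "card X < card G" using fin by (rule psubset_card_mono[rotated])
    then show "card X \<le> card G - 1" by simp
  qed
  have c0: "card G > 0" using fin ne by (simp add: card_gt_0_iff)
  have r2: "rank M (G - {e}) = card G - 1" if e: "e \<in> G" for e
  proof -
    have g2: "is_graph (G - {e})" using is_graph_subset[OF assms(1)] by simp
    have "rank M (G - {e}) \<le> card (G - {e})"
    proof (rule rank_le[OF g2])
      fix X assume "X \<subseteq> G - {e}" "ind X"
      then show "card X \<le> card (G - {e})" using fin by (simp add: card_mono)
    qed
    moreover have "card (G - {e}) \<le> rank M (G - {e})" using rank_ge[OF g2 _ assms(3)[OF e]] by simp
    ultimately show ?thesis using e fin by simp
  qed
  have "rank M G < card G" using r1 c0 by simp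
  then show ?thesis unfolding circuit_def using assms(1) r2 by simp
qed

lemma span_bound:
  assumes "ind B" "\<And>t. t \<in> T \<Longrightarrow> t \<notin> B \<Longrightarrow> \<not> ind (insert t B)" "J \<subseteq> B \<union> T" "ind J"
  shows "card J \<le> card B"
proof (rule ccontr)
  assume "\<not> card J \<le> card B"
  then obtain y where "y \<in> J - B" "ind (insert y B)" using ind_aug[OF assms(1) assms(4)] by auto
  then show False using assms(2,3) by blast
qed


lemma lim_ge: assumes "bounded_family M" "is_graph G" shows "rank M G \<le> family_limit M"
proof -
  obtain n where n: "\<forall>x\<in>verts G. x < n" using finite_verts[OF assms(2)] finite_nat_set_iff_bounded by blast
  have sub: "G \<subseteq> complete_graph n" using subset_complete_graph[OF assms(2) n] .
  have "rank M G \<le> rank M (complete_graph n)"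
    by (rule rank_le[OF assms(2)]) (use sub rank_ge[OF complete_graph_is_graph] in blast)
  moreover have "bdd_above (range (\<lambda>n. rank M (complete_graph n)))"
    using assms(1) unfolding bounded_family_def by (auto intro: bdd_aboveI2)
  then have "rank M (complete_graph n) \<le> family_limit M"
    unfolding family_limit_def by (rule cSUP_upper[OF UNIV_I])
  ultimately show ?thesis by simp
qed

lemma lim_le: assumes "\<And>n. rank M (complete_graph n) \<le> k" shows "family_limit M \<le> k"
  unfolding family_limit_def using assms by (intro cSUP_least) auto

lemma pendant: assumes "is_graph G" "min_degree_one G"
  shows "\<exists>u v. {u,v} \<in> G \<and> u \<noteq> v \<and> (\<forall>d\<in>G. v \<in> d \<longrightarrow> d = {u,v})"
proof -
  have ne: "G \<noteq> {}" using assms(2) min_degree_one_def by simp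
  then obtain e0 where e0: "e0 \<in> G" by blast
  then obtain a0 b0 where "a0 \<noteq> b0" "e0 = {a0,b0}" using assms(1) unfolding is_graph_def by meson
  then have "a0 \<in> verts G" using e0 unfolding verts_def by blast
  then have vne: "verts G \<noteq> {}" by blast
  have "Min (degree G ` verts G) \<in> degree G ` verts G"
    using finite_verts[OF assms(1)] vne by (intro Min_in) auto
  moreover have "Min (degree G ` verts G) = 1" using assms(2) unfolding min_degree_one_def by simp
  ultimately have "1 \<in> degree G ` verts G" by simp
  then obtain v where v: "v \<in> verts G" "degree G v = 1" by (metis imageE)
  then have "card {d\<in>G. v \<in> d} = 1" unfolding degree_def by simp
  then obtain e where e: "{d\<in>G. v \<in> d} = {e}" by (rule card_1_singletonE)
  then have eG: "e \<in> G" "v \<in> e" by auto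
  then obtain a b where ab: "a \<noteq> b" "e = {a,b}" using assms(1) unfolding is_graph_def by meson
  define u where "u = (if v = a then b else a)"
  have u: "e = {u,v}" "u \<noteq> v" using ab eG unfolding u_def by auto
  have "\<forall>d\<in>G. v \<in> d \<longrightarrow> d = {u,v}"
  proof (intro ballI impI)
    fix d assume "d \<in> G" "v \<in> d"
    then have "d \<in> {d\<in>G. v \<in> d}" by simp
    then show "d = {u,v}" using e u(1) by simp
  qed
  then show ?thesis using eG(1) u by metis
qed

lemma pend_dep:
  assumes "circuit M G" "{u,v} \<in> G" "u \<noteq> v" "\<forall>d\<in>G. v \<in> d \<longrightarrow> d = {u,v}" "w \<notin> verts G"
  shows "\<not> ind (insert {u,w} (G - {{u,v}}))"
proof -
  have g: "is_graph G" using assms(1) circuit_def by simp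
  define h where "h z = (if z = v then w else z)" for z
  have wG: "w \<notin> \<Union>G" using assms(5) unfolding verts_def .
  have inj: "inj_on h (\<Union>G)"
  proof (rule inj_onI)
    fix p q assume "p \<in> \<Union>G" "q \<in> \<Union>G" "h p = h q"
    then have "p \<noteq> w" "q \<noteq> w" "h p = h q" using wG by auto
    then show "p = q" unfolding h_def by (simp split: if_splits)
  qed
  have fix1: "h ` d = d" if d: "d \<in> G - {{u,v}}" for d
  proof -
    have "v \<notin> d" using d assms(4) by blast
    then show ?thesis unfolding h_def by force
  qed
  have A: "(\<lambda>e. h ` e) ` (G - {{u,v}}) = (\<lambda>e. e) ` (G - {{u,v}})"
    by (rule image_cong) (simp_all add: fix1)
  have B: "h ` {u,v} = {u,w}" using assms(3) unfolding h_def by simp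
  have C: "G = insert {u,v} (G - {{u,v}})" using assms(2) by (simp add: insert_absorb)
  have D: "(\<lambda>e. h ` e) ` G = insert (h ` {u,v}) ((\<lambda>e. h ` e) ` (G - {{u,v}}))"
    by (subst C) (rule image_insert)
  have "(\<lambda>e. h ` e) ` G = insert {u,w} (G - {{u,v}})"
    unfolding D A B by simp
  then show ?thesis using ind_iso[OF g inj] circuit_D(1)[OF assms(1)] by simp
qed

lemma star_dep: assumes "circuit M G" "min_degree_one G"
  shows "\<not> ind (star (card G))"
proof -
  have g: "is_graph G" using assms(1) circuit_def by simp
  have fin: "finite G" using g is_graph_def by simp
  obtain u v where uv: "{u,v} \<in> G" "u \<noteq> v" "\<forall>d\<in>G. v \<in> d \<longrightarrow> d = {u,v}"
    using pendant[OF g assms(2)] by blast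
  obtain N where N: "\<forall>x\<in>verts G. x < N" using finite_verts[OF g] finite_nat_set_iff_bounded by blast
  define W where "W = {N..<N + card G}"
  have uW: "u \<notin> W" using N uv(1) unfolding W_def verts_def by auto
  define B where "B = G - {{u,v}}"
  have indB: "ind B" using circuit_D(2)[OF assms(1) uv(1)] B_def by simp
  have cB: "card B = card G - 1" using uv(1) fin B_def by simp
  have "card G > 0" using uv(1) fin by (auto simp: card_gt_0_iff)
  have "\<not> ind (star_at u W)"
  proof
    assume i: "ind (star_at u W)"
    have "card (star_at u W) \<le> card B"
    proof (rule span_bound[OF indB _ _ i])
      fix t assume "t \<in> star_at u W" "t \<notin> B"
      then obtain w where w: "t = {u,w}" "w \<in> W" unfolding star_at_def by auto
      then have "w \<notin> verts G" using N unfolding W_def by auto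
      then show "\<not> ind (insert t B)" using pend_dep[OF assms(1) uv] w B_def by simp
    qed auto
    then show False using card_star_at[OF uW] cB \<open>card G > 0\<close> unfolding W_def by simp
  qed
  then show ?thesis using ind_star_at[of W u] uW unfolding W_def by simp
qed

lemma transport:
  assumes "finite W" "finite W0" "card W0 = card W"
    "u \<notin> W" "x \<notin> W" "y \<notin> W" "x \<noteq> y" "x \<noteq> u" "y \<noteq> u"
    "a \<notin> W0" "b \<notin> W0" "c \<notin> W0" "a \<noteq> b" "a \<noteq> c" "b \<noteq> c"
  shows "ind (insert {a,b} (star_at c W0)) \<longleftrightarrow> ind (insert {x,y} (star_at u W))"
proof -
  obtain g where g: "bij_betw g W0 W" using finite_same_card_bij[OF assms(2,1,3)] by blast
  define h where "h z = (if z = a then x else if z = b then y else if z = c then u else g z)" for z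
  have ginj: "inj_on g W0" and gW: "g ` W0 = W" using g unfolding bij_betw_def by auto
  have hW: "h z = g z" "g z \<in> W" if "z \<in> W0" for z
    using that assms gW unfolding h_def by auto
  have inj: "inj_on h (insert a (insert b (insert c W0)))"
  proof (rule inj_onI)
    fix p q assume p: "p \<in> insert a (insert b (insert c W0))" and q: "q \<in> insert a (insert b (insert c W0))"
      and e: "h p = h q"
    show "p = q"
    proof (cases "p \<in> W0")
      case True
      show ?thesis
      proof (cases "q \<in> W0")
        case True
        then show ?thesis using \<open>p \<in> W0\<close> e hW inj_onD[OF ginj] by metis
      next
        case False
        then have "h q \<in> {x,y,u}" using q assms unfolding h_def by auto
        then show ?thesis using hW[OF \<open>p \<in> W0\<close>] e assms by auto
      qed
    next
      case False
      then have pp: "p \<in> {a,b,c}" using p by auto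
      show ?thesis
      proof (cases "q \<in> W0")
        case True
        then show ?thesis using hW[OF True] e assms pp unfolding h_def by auto
      next
        case False
        then have "q \<in> {a,b,c}" using q by auto
        then show ?thesis using pp e assms unfolding h_def by auto
      qed
    qed
  qed
  have img: "(\<lambda>e. h ` e) ` (insert {a,b} (star_at c W0)) = insert {x,y} (star_at u W)"
  proof -
    have "h ` {a,b} = {x,y}" using assms unfolding h_def by auto
    moreover have "(\<lambda>e. h ` e) ` star_at c W0 = star_at u (g ` W0)"
      unfolding star_at_def h_def using assms by (auto simp: image_image)
    ultimately show ?thesis using g by (simp add: bij_betw_def)
  qed
  have gr: "is_graph (insert {a,b} (star_at c W0))"
    using is_graph_insert[OF is_graph_star_at[OF assms(2,12)] assms(13)] .
  have "\<Union>(insert {a,b} (star_at c W0)) \<subseteq> insert a (insert b (insert c W0))"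
    using Union_star_at[of c W0] by auto
  then have "inj_on h (\<Union>(insert {a,b} (star_at c W0)))" by (rule inj_on_subset[OF inj])
  from ind_iso[OF gr this] show ?thesis unfolding img by (rule sym)
qed

lemma edge_form: assumes "is_graph G" "d \<in> G" "u \<in> d" shows "\<exists>l. l \<noteq> u \<and> d = {u,l}"
proof -
  obtain a b where ab: "a \<noteq> b" "d = {a,b}" using assms(1,2) unfolding is_graph_def by meson
  show ?thesis
  proof (cases "u = a")
    case True then show ?thesis using ab by (intro exI[of _ b]) simp
  next
    case False then have "u = b" using ab assms(3) by simp
    then show ?thesis using ab by (metis insert_commute)
  qed
qed

lemma main:
  assumes bnd: "bounded_family M" and G0: "small_circuit M G0" "min_degree_one G0"
  shows "\<exists>m::nat. m \<ge> 2 \<and> small_circuit M (star m) \<and>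
           (\<forall>G. small_circuit M G \<and> card G \<le> m \<and> min_degree_one G \<longrightarrow> isomorphic G (star m))"
proof -
  define m where "m = (LEAST k. \<not> ind (star k))"
  have c0: "circuit M G0" using G0(1) small_circuit_def by simp
  have r0: "card G0 \<le> family_limit M" using G0(1) small_circuit_def by simp
  have g0: "is_graph G0" using c0 circuit_def by simp
  have dep0: "\<not> ind (star (card G0))" using star_dep[OF c0 G0(2)] .
  have hm: "\<not> ind (star m)" unfolding m_def using dep0 by (rule LeastI)
  have hlt: "ind (star k)" if "k < m" for k
    using not_less_Least[of k "\<lambda>k. \<not> ind (star k)"] that unfolding m_def by simp
  have mle: "m \<le> card G" if "circuit M G" "min_degree_one G" for G
    unfolding m_def using star_dep[OF that] by (rule Least_le)
  have G0ne: "G0 \<noteq> {}" using circuit_D(1)[OF c0] ind_empty by auto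
  have fin0: "finite G0" using g0 is_graph_def by simp
  have m0: "m \<noteq> 0"
  proof
    assume "m = 0"
    moreover have "star 0 = {}" unfolding star_def by simp
    ultimately show False using hm ind_empty by simp
  qed
  have m1: "m \<noteq> 1"
  proof
    assume m1: "m = 1"
    have emp: "J = {}" if J: "ind J" for J
    proof (rule ccontr)
      assume "J \<noteq> {}"
      then obtain d where d: "d \<in> J" by blast
      then have i1: "ind {d}" using ind_subset[OF J] by simp
      obtain a b where ab: "a \<noteq> b" "d = {a,b}" using ind_graph[OF J] d unfolding is_graph_def by meson
      have "{d} = star_at a {b}" unfolding star_at_def ab by simp
      then have "ind (star_at a {b})" using i1 by simp
      then have "ind (star 1)" using ind_star_at[of "{b}" a] ab(1) by simp
      then show False using hm m1 by simp
    qed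
    have "family_limit M \<le> 0"
    proof (rule lim_le)
      fix n show "rank M (complete_graph n) \<le> 0"
        by (rule rank_le[OF complete_graph_is_graph]) (metis emp card.empty le_refl)
    qed
    then have "card G0 = 0" using r0 by simp
    then show False using fin0 G0ne by simp
  qed
  have m2: "m \<ge> 2" using m0 m1 by linarith
  have sm: "star m = star_at 0 {1..m}" by (rule star_eq)
  have z: "(0::nat) \<notin> {1..m}" by simp
  have cs: "circuit M (star m)"
  proof (rule circuit_I)
    show "is_graph (star m)" unfolding sm by (rule is_graph_star_at) simp_all
    show "\<not> ind (star m)" by (rule hm)
    fix e assume e: "e \<in> star m"
    then obtain i where i: "i \<in> {1..m}" "e = {0,i}" unfolding sm star_at_def by blast
    have "star m - {e} = star_at 0 ({1..m} - {i})"
      unfolding sm star_at_def i(2) using i(1) by (auto simp: doubleton_eq_iff)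
    moreover have "ind (star_at 0 ({1..m} - {i}))"
    proof -
      have "card ({1..m} - {i}) = m - 1" using i(1) by simp
      moreover have "m - 1 < m" using m2 by simp
      ultimately show ?thesis using ind_star_at[of "{1..m} - {i}" 0] hlt by simp
    qed
    ultimately show "ind (star m - {e})" by simp
  qed
  have cardsm: "card (star m) = m" unfolding sm using card_star_at[OF z] by simp
  have ss: "small_circuit M (star m)"
    unfolding small_circuit_def using cs cardsm mle[OF c0 G0(2)] r0 by simp
  have uniq: "isomorphic G (star m)"
    if G: "small_circuit M G" "card G \<le> m" "min_degree_one G" for G
  proof -
    have c: "circuit M G" using G(1) small_circuit_def by simp
    have g: "is_graph G" using c circuit_def by simp
    have fin: "finite G" using g is_graph_def by simp
    have rG: "card G \<le> family_limit M" using G(1) small_circuit_def by simp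
    have cG: "card G = m" using mle[OF c G(3)] G(2) by simp
    obtain u v where uv: "{u,v} \<in> G" "u \<noteq> v" "\<forall>d\<in>G. v \<in> d \<longrightarrow> d = {u,v}"
      using pendant[OF g G(3)] by blast
    have uV: "u \<in> verts G" using uv(1) unfolding verts_def by blast
    have allu: "\<forall>d\<in>G. u \<in> d"
    proof (rule ccontr)
      assume "\<not> (\<forall>d\<in>G. u \<in> d)"
      then obtain f where f: "f \<in> G" "u \<notin> f" by blast
      obtain N where N: "\<forall>x\<in>verts G. x < N" using finite_verts[OF g] finite_nat_set_iff_bounded by blast
      define W where "W = {N..<N + (m - 1)}"
      have finW: "finite W" and cW: "card W = m - 1" unfolding W_def by simp_all
      have notW: "z \<notin> W" if "z \<in> verts G" for z using N that unfolding W_def by auto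
      have uW: "u \<notin> W" using notW[OF uV] .
      define B where "B = G - {{u,v}}"
      have indB: "ind B" using circuit_D(2)[OF c uv(1)] B_def by simp
      have cB: "card B = m - 1" using uv(1) fin cG B_def by simp
      have fB: "f \<in> B" using f unfolding B_def by auto
      obtain x y where xy: "x \<noteq> y" "f = {x,y}" using g f(1) unfolding is_graph_def by meson
      have xyV: "x \<in> verts G" "y \<in> verts G" using f(1) xy(2) unfolding verts_def by auto
      have xyu: "x \<noteq> u" "y \<noteq> u" using f(2) xy(2) by auto
      define S where "S = star_at u W"
      have cS: "card S = m - 1" unfolding S_def using card_star_at[OF uW] cW by simp
      have indS: "ind S" unfolding S_def using ind_star_at[OF finW uW] cW hlt m2 by simp
      have fS: "f \<notin> S" using f(2) unfolding S_def star_at_def by auto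
      have depf: "\<not> ind (insert f S)"
      proof
        assume i: "ind (insert f S)"
        have "card (insert f S) \<le> card B"
        proof (rule span_bound[OF indB _ _ i])
          fix t assume "t \<in> S" "t \<notin> B"
          then obtain w where w: "t = {u,w}" "w \<in> W" unfolding S_def star_at_def by blast
          have "w \<notin> verts G"
          proof
            assume "w \<in> verts G" then show False using notW w(2) by blast
          qed
          then show "\<not> ind (insert t B)" using pend_dep[OF c uv] w(1) unfolding B_def by simp
        next
          show "insert f S \<subseteq> B \<union> S" using fB by blast
        qed
        moreover have "card (insert f S) = m" using fS cS finW m2
          unfolding S_def star_at_def by simp
        ultimately show False using cB m2 by simp
      qed
      have "family_limit M \<le> m - 1"
      proof (rule lim_le)
        fix n
        define W0 where "W0 = {Suc n..<n + m}"
        have finW0: "finite W0" and cW0: "card W0 = m - 1" unfolding W0_def using m2 by simp_all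
        have nW0: "n \<notin> W0" unfolding W0_def by simp
        define S0 where "S0 = star_at n W0"
        have cS0: "card S0 = m - 1" unfolding S0_def using card_star_at[OF nW0] cW0 by simp
        have indS0: "ind S0" unfolding S0_def using ind_star_at[OF finW0 nW0] cW0 hlt m2 by simp
        show "rank M (complete_graph n) \<le> m - 1"
        proof (rule rank_le[OF complete_graph_is_graph])
          fix X assume X: "X \<subseteq> complete_graph n" "ind X"
          have "card X \<le> card S0"
          proof (rule span_bound[OF indS0 _ _ X(2)])
            fix t assume t: "t \<in> complete_graph n" "t \<notin> S0"
            then obtain a b where ab: "t = {a,b}" "a < n" "b < n" "a \<noteq> b"
              unfolding complete_graph_def by blast
            have aW: "a \<notin> W0" "b \<notin> W0" using ab unfolding W0_def by auto
            have "ind (insert {a,b} (star_at n W0)) \<longleftrightarrow> ind (insert {x,y} (star_at u W))"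
              by (rule transport) (use finW finW0 cW cW0 uW notW xyV xy(1) xyu aW nW0 ab in auto)
            then show "\<not> ind (insert t S0)" using depf unfolding S0_def S_def ab(1) xy(2) by simp
          next
            show "X \<subseteq> S0 \<union> complete_graph n" using X(1) by blast
          qed
          then show "card X \<le> m - 1" using cS0 by simp
        qed
      qed
      then show False using rG cG m2 by simp
    qed
    define L where "L = verts G - {u}"
    have finL: "finite L" using finite_verts[OF g] unfolding L_def by simp
    have uL: "u \<notin> L" unfolding L_def by simp
    have GL: "G = star_at u L"
    proof
      show "G \<subseteq> star_at u L"
      proof
        fix d assume d: "d \<in> G"
        obtain l where l: "l \<noteq> u" "d = {u,l}" using edge_form[OF g d] allu d by blast
        have "l \<in> L" using d l unfolding L_def verts_def by blast
        then show "d \<in> star_at u L" unfolding star_at_def l(2) by blast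
      qed
    next
      show "star_at u L \<subseteq> G"
      proof
        fix d assume "d \<in> star_at u L"
        then obtain l where l: "l \<in> L" "d = {u,l}" unfolding star_at_def by blast
        then obtain d' where d': "d' \<in> G" "l \<in> d'" "l \<noteq> u" unfolding L_def verts_def by blast
        obtain l' where l': "l' \<noteq> u" "d' = {u,l'}" using edge_form[OF g d'(1)] allu d'(1) by blast
        have "l' = l" using d'(2,3) l'(2) by simp
        then show "d \<in> G" using d'(1) l'(2) l(2) by simp
      qed
    qed
    have "card L = m" using cG card_star_at[OF uL] GL by simp
    then show ?thesis using iso_star_at[OF finL uL] GL by simp
  qed
  show ?thesis using m2 ss uniq by blast
qed

end

theorem proposition2p5:
  fixes M :: "graph \<Rightarrow> nat set set \<Rightarrow> bool"
  assumes "graph_matroid_family M"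
    and "bounded_family M"
    and "\<exists>G. small_circuit M G \<and> min_degree_one G"
  shows "\<exists>m::nat. m \<ge> 2 \<and> small_circuit M (star m) \<and>
           (\<forall>G. small_circuit M G \<and> card G \<le> m \<and> min_degree_one G \<longrightarrow> isomorphic G (star m))"
proof -
  interpret gmf M by (rule gmf.intro) (rule assms(1))
  obtain G0 where G0: "small_circuit M G0" "min_degree_one G0" using assms(3) by blast
  show ?thesis by (rule main[OF assms(2) G0])
qed

end
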